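(* Let $m,p,n$ be positive integers with $p\mid m$, $n>1$, and $G=G(m,p,n)$ acting on $\mathbb T^n$. (i) The commuting tuple $(M_{\theta_1},\ldots,M_{\theta_n})$ of multiplication operators on $L^2(\mathbb T^n)$ is a $\boldsymbol\Theta_n$-unitary. (ii) For every $\varrho\in\widehat G$, the restriction of $(M_{\theta_1},\ldots,M_{\theta_n})$ to $\mathbb P_\varrho\big(L^2(\mathbb T^n)\big)$ is a $\boldsymbol\Theta_n$-unitary.
   Context: $G(m,p,n)$ is the group of $n\times n$ monomial matrices with nonzero entries $m$-th roots of unity whose product is an $(m/p)$-th root of unity, acting by $\sigma\cdot z=\sigma^{-1}z$. $\theta_i(z)=s_i(z_1^m,\ldots,z_n^m)$ for $1\le i\le n-1$, $\theta_n(z)=(z_1\cdots z_n)^{m/p}$, $\boldsymbol\Theta_n=\boldsymbol\theta(\mathbb D^n)$, whose distinguished boundary is $\boldsymbol\theta(\mathbb T^n)$. A $\boldsymbol\Theta_n$-unitary is a commuting tuple of normal operators whose joint (Taylor) spectrum lies in the distinguished boundary of $\boldsymbol\Theta_n$. $L^2(\mathbb T^n)$ is taken with Lebesgue measure. $\widehat G$ is the set of equivalence classes of irreducible representations of $G$, $\chi_\varrho$ the character of $\varrho$, and $(\mathbb P_\varrho f)(z)=\frac{\deg\varrho}{|G|}\sum_{\sigma\in G}\chi_\varrho(\sigma^{-1})f(\sigma^{-1}\cdot z)$. *)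

theory Defs
  imports "HOL-Analysis.Analysis"
begin

text \<open>Points of C^n are extensional functions on the index set {1..n}.\<close>

definition torus :: "nat \<Rightarrow> (nat \<Rightarrow> complex) set" where
  "torus n = PiE {1..n} (\<lambda>_. sphere 0 1)"

definition circle_measure :: "complex measure" where
  "circle_measure = distr (lebesgue_on {0..<2*pi}) borel cis"

definition torus_measure :: "nat \<Rightarrow> (nat \<Rightarrow> complex) measure" where
  "torus_measure n = PiM {1..n} (\<lambda>_. circle_measure)"

section \<open>L^2 (as square integrable functions modulo a.e. equality)\<close>

definition L2 :: "'a measure \<Rightarrow> ('a \<Rightarrow> complex) set" where
  "L2 M = {f. f \<in> borel_measurable M \<and> integrable M (\<lambda>x. (cmod (f x))^2)}"

definition ae_eq :: "'a measure \<Rightarrow> ('a \<Rightarrow> complex) \<Rightarrow> ('a \<Rightarrow> complex) \<Rightarrow> bool" where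
  "ae_eq M f g = (AE x in M. f x = g x)"

definition L2_inner :: "'a measure \<Rightarrow> ('a \<Rightarrow> complex) \<Rightarrow> ('a \<Rightarrow> complex) \<Rightarrow> complex" where
  "L2_inner M f g = integral\<^sup>L M (\<lambda>x. f x * cnj (g x))"

definition L2_norm :: "'a measure \<Rightarrow> ('a \<Rightarrow> complex) \<Rightarrow> real" where
  "L2_norm M f = sqrt (integral\<^sup>L M (\<lambda>x. (cmod (f x))^2))"

definition bounded_op :: "'a measure \<Rightarrow> ('a \<Rightarrow> complex) set \<Rightarrow>
    (('a \<Rightarrow> complex) \<Rightarrow> ('a \<Rightarrow> complex)) \<Rightarrow> bool" where
  "bounded_op M H A \<longleftrightarrow>
     (\<forall>f\<in>H. A f \<in> H) \<and>
     (\<forall>f\<in>H. \<forall>g\<in>H. ae_eq M f g \<longrightarrow> ae_eq M (A f) (A g)) \<and>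
     (\<forall>f\<in>H. \<forall>g\<in>H. ae_eq M (A (\<lambda>x. f x + g x)) (\<lambda>x. A f x + A g x)) \<and>
     (\<forall>c. \<forall>f\<in>H. ae_eq M (A (\<lambda>x. c * f x)) (\<lambda>x. c * A f x)) \<and>
     (\<exists>C. \<forall>f\<in>H. L2_norm M (A f) \<le> C * L2_norm M f)"

definition normal_op :: "'a measure \<Rightarrow> ('a \<Rightarrow> complex) set \<Rightarrow>
    (('a \<Rightarrow> complex) \<Rightarrow> ('a \<Rightarrow> complex)) \<Rightarrow> bool" where
  "normal_op M H A \<longleftrightarrow> bounded_op M H A \<and>
     (\<exists>B. bounded_op M H B \<and>
          (\<forall>f\<in>H. \<forall>g\<in>H. L2_inner M (A f) g = L2_inner M f (B g)) \<and>
          (\<forall>f\<in>H. ae_eq M (A (B f)) (B (A f))))"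

definition commuting_tuple :: "'a measure \<Rightarrow> ('a \<Rightarrow> complex) set \<Rightarrow> nat \<Rightarrow>
    (nat \<Rightarrow> ('a \<Rightarrow> complex) \<Rightarrow> ('a \<Rightarrow> complex)) \<Rightarrow> bool" where
  "commuting_tuple M H n T \<longleftrightarrow>
     (\<forall>i\<in>{1..n}. \<forall>j\<in>{1..n}. \<forall>f\<in>H. ae_eq M (T i (T j f)) (T j (T i f)))"

text \<open>A k-cochain of the Koszul complex of (T_1 - l_1, ..., T_n - l_n) on H:
  a family of elements of H indexed by the k-element subsets of {1..n}
  (i.e. an element of the k-th exterior power of C^n tensored with H).\<close>
definition cochain :: "('a \<Rightarrow> complex) set \<Rightarrow> nat \<Rightarrow> nat \<Rightarrow> (nat set \<Rightarrow> ('a \<Rightarrow> complex)) \<Rightarrow> bool" where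
  "cochain H n k \<omega> \<longleftrightarrow> (\<forall>S. S \<subseteq> {1..n} \<and> card S = k \<longrightarrow> \<omega> S \<in> H)"

definition koszul_d :: "(nat \<Rightarrow> ('a \<Rightarrow> complex) \<Rightarrow> ('a \<Rightarrow> complex)) \<Rightarrow> (nat \<Rightarrow> complex) \<Rightarrow>
    (nat set \<Rightarrow> ('a \<Rightarrow> complex)) \<Rightarrow> nat set \<Rightarrow> ('a \<Rightarrow> complex)" where
  "koszul_d T l \<omega> S = (\<lambda>x. \<Sum>j\<in>S. (-1) ^ card {i\<in>S. i < j} *
        (T j (\<omega> (S - {j})) x - l j * \<omega> (S - {j}) x))"

definition koszul_exact_at :: "'a measure \<Rightarrow> ('a \<Rightarrow> complex) set \<Rightarrow> nat \<Rightarrow>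
    (nat \<Rightarrow> ('a \<Rightarrow> complex) \<Rightarrow> ('a \<Rightarrow> complex)) \<Rightarrow> (nat \<Rightarrow> complex) \<Rightarrow> nat \<Rightarrow> bool" where
  "koszul_exact_at M H n T l k \<longleftrightarrow>
     (\<forall>\<omega>. cochain H n k \<omega> \<and>
          (\<forall>S. S \<subseteq> {1..n} \<and> card S = k + 1 \<longrightarrow> ae_eq M (koszul_d T l \<omega> S) (\<lambda>_. 0))
      \<longrightarrow> (if k = 0 then ae_eq M (\<omega> {}) (\<lambda>_. 0)
           else (\<exists>\<eta>. cochain H n (k - 1) \<eta> \<and>
                   (\<forall>S. S \<subseteq> {1..n} \<and> card S = k \<longrightarrow> ae_eq M (koszul_d T l \<eta> S) (\<omega> S)))))"

definition taylor_spectrum :: "'a measure \<Rightarrow> ('a \<Rightarrow> complex) set \<Rightarrow> nat \<Rightarrow>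
    (nat \<Rightarrow> ('a \<Rightarrow> complex) \<Rightarrow> ('a \<Rightarrow> complex)) \<Rightarrow> (nat \<Rightarrow> complex) set" where
  "taylor_spectrum M H n T =
     {l \<in> extensional {1..n}. \<exists>k\<le>n. \<not> koszul_exact_at M H n T l k}"

definition theta :: "nat \<Rightarrow> nat \<Rightarrow> nat \<Rightarrow> nat \<Rightarrow> (nat \<Rightarrow> complex) \<Rightarrow> complex" where
  "theta m p n i z =
     (if i = n then (\<Prod>j\<in>{1..n}. z j) ^ (m div p)
      else (\<Sum>S\<in>{S. S \<subseteq> {1..n} \<and> card S = i}. \<Prod>j\<in>S. z j ^ m))"

definition theta_map :: "nat \<Rightarrow> nat \<Rightarrow> nat \<Rightarrow> (nat \<Rightarrow> complex) \<Rightarrow> (nat \<Rightarrow> complex)" where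
  "theta_map m p n z = restrict (\<lambda>i. theta m p n i z) {1..n}"

text \<open>Distinguished boundary of Theta_n = theta(D^n): the set theta(T^n).\<close>
definition dist_boundary :: "nat \<Rightarrow> nat \<Rightarrow> nat \<Rightarrow> (nat \<Rightarrow> complex) set" where
  "dist_boundary m p n = theta_map m p n ` torus n"

definition Theta_unitary :: "nat \<Rightarrow> nat \<Rightarrow> nat \<Rightarrow> 'a measure \<Rightarrow> ('a \<Rightarrow> complex) set \<Rightarrow>
    (nat \<Rightarrow> ('a \<Rightarrow> complex) \<Rightarrow> ('a \<Rightarrow> complex)) \<Rightarrow> bool" where
  "Theta_unitary m p n M H T \<longleftrightarrow>
     (\<forall>j\<in>{1..n}. normal_op M H (T j)) \<and> commuting_tuple M H n T \<and>
     taylor_spectrum M H n T \<subseteq> dist_boundary m p n"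

definition mult_op :: "('a \<Rightarrow> complex) \<Rightarrow> ('a \<Rightarrow> complex) \<Rightarrow> ('a \<Rightarrow> complex)" where
  "mult_op \<phi> f = (\<lambda>x. \<phi> x * f x)"

section \<open>The group G(m,p,n) as n x n matrices (functions on {1..n}^2)\<close>

definition mmult :: "nat \<Rightarrow> (nat \<Rightarrow> nat \<Rightarrow> complex) \<Rightarrow> (nat \<Rightarrow> nat \<Rightarrow> complex) \<Rightarrow> (nat \<Rightarrow> nat \<Rightarrow> complex)" where
  "mmult n A B = (\<lambda>i j. if i \<in> {1..n} \<and> j \<in> {1..n} then \<Sum>k\<in>{1..n}. A i k * B k j else 0)"

definition idm :: "nat \<Rightarrow> (nat \<Rightarrow> nat \<Rightarrow> complex)" where
  "idm n = (\<lambda>i j. if i \<in> {1..n} \<and> j = i then 1 else 0)"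

definition mvec :: "nat \<Rightarrow> (nat \<Rightarrow> nat \<Rightarrow> complex) \<Rightarrow> (nat \<Rightarrow> complex) \<Rightarrow> (nat \<Rightarrow> complex)" where
  "mvec n A z = restrict (\<lambda>i. \<Sum>j\<in>{1..n}. A i j * z j) {1..n}"

definition Gmpn :: "nat \<Rightarrow> nat \<Rightarrow> nat \<Rightarrow> (nat \<Rightarrow> nat \<Rightarrow> complex) set" where
  "Gmpn m p n = {A. \<exists>\<pi> \<zeta>. \<pi> permutes {1..n} \<and> (\<forall>i\<in>{1..n}. \<zeta> i ^ m = 1) \<and>
       (\<Prod>i\<in>{1..n}. \<zeta> i) ^ (m div p) = 1 \<and>
       A = (\<lambda>i j. if i \<in> {1..n} \<and> j = \<pi> i then \<zeta> i else 0)}"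

definition ginv :: "nat \<Rightarrow> (nat \<Rightarrow> nat \<Rightarrow> complex) set \<Rightarrow> (nat \<Rightarrow> nat \<Rightarrow> complex) \<Rightarrow> (nat \<Rightarrow> nat \<Rightarrow> complex)" where
  "ginv n G \<sigma> = (THE \<tau>. \<tau> \<in> G \<and> mmult n \<sigma> \<tau> = idm n)"

definition gact :: "nat \<Rightarrow> (nat \<Rightarrow> nat \<Rightarrow> complex) set \<Rightarrow> (nat \<Rightarrow> nat \<Rightarrow> complex) \<Rightarrow> (nat \<Rightarrow> complex) \<Rightarrow> (nat \<Rightarrow> complex)" where
  "gact n G \<sigma> z = mvec n (ginv n G \<sigma>) z"

section \<open>Irreducible complex representations of G on C^d (d = CARD('d))\<close>

definition is_irrep :: "nat \<Rightarrow> (nat \<Rightarrow> nat \<Rightarrow> complex) set \<Rightarrow>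
    ((nat \<Rightarrow> nat \<Rightarrow> complex) \<Rightarrow> complex^'d^'d) \<Rightarrow> bool" where
  "is_irrep n G \<rho> \<longleftrightarrow>
     (\<forall>\<sigma>\<in>G. \<forall>\<tau>\<in>G. \<rho> (mmult n \<sigma> \<tau>) = \<rho> \<sigma> ** \<rho> \<tau>) \<and>
     (\<forall>\<sigma>\<in>G. invertible (\<rho> \<sigma>)) \<and>
     (\<forall>W :: (complex^'d) set.
        (0 \<in> W \<and> (\<forall>x\<in>W. \<forall>y\<in>W. x + y \<in> W) \<and> (\<forall>c. \<forall>x\<in>W. c *s x \<in> W) \<and>
         (\<forall>\<sigma>\<in>G. \<forall>x\<in>W. \<rho> \<sigma> *v x \<in> W)) \<longrightarrow> W = {0} \<or> W = UNIV)"

definition character :: "((nat \<Rightarrow> nat \<Rightarrow> complex) \<Rightarrow> complex^'d^'d) \<Rightarrow> (nat \<Rightarrow> nat \<Rightarrow> complex) \<Rightarrow> complex" where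
  "character \<rho> \<sigma> = trace (\<rho> \<sigma>)"

definition isotypic_proj :: "nat \<Rightarrow> (nat \<Rightarrow> nat \<Rightarrow> complex) set \<Rightarrow>
    ((nat \<Rightarrow> nat \<Rightarrow> complex) \<Rightarrow> complex^'d^'d) \<Rightarrow> ((nat \<Rightarrow> complex) \<Rightarrow> complex) \<Rightarrow> ((nat \<Rightarrow> complex) \<Rightarrow> complex)" where
  "isotypic_proj n G \<rho> f = (\<lambda>z. (of_nat CARD('d) / of_nat (card G)) *
      (\<Sum>\<sigma>\<in>G. character \<rho> (ginv n G \<sigma>) * f (gact n G (ginv n G \<sigma>) z)))"

text \<open>The range P_rho(L^2(T^n)), as a set of representatives (closed under a.e. equality).\<close>
definition isotypic_range :: "nat \<Rightarrow> (nat \<Rightarrow> nat \<Rightarrow> complex) set \<Rightarrow>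
    ((nat \<Rightarrow> nat \<Rightarrow> complex) \<Rightarrow> complex^'d^'d) \<Rightarrow> ((nat \<Rightarrow> complex) \<Rightarrow> complex) set" where
  "isotypic_range n G \<rho> =
     {g \<in> L2 (torus_measure n). \<exists>f\<in>L2 (torus_measure n).
        ae_eq (torus_measure n) g (isotypic_proj n G \<rho> f)}"

end

theory Submission
  imports Defs
begin


lemma circle_space[simp]: "space circle_measure = UNIV"
  by (simp add: circle_measure_def)
lemma circle_sets[simp]: "sets circle_measure = sets borel"
  by (simp add: circle_measure_def)

lemma cis_meas: "cis \<in> borel_measurable (lebesgue_on {0..<2*pi})"
  by (intro continuous_imp_measurable_on_sets_lebesgue continuous_intros) auto

lemma circle_finite: "finite_measure circle_measure"
proof -
  have "finite_measure (lebesgue_on {0..<2*pi})"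
    by (intro finite_measure_lebesgue_on bounded_set_imp_lmeasurable) auto
  then show ?thesis unfolding circle_measure_def
    using cis_meas finite_measure.finite_measure_distr by blast
qed

lemma circle_null: "emeasure circle_measure (- sphere 0 1) = 0"
proof -
  have "emeasure circle_measure (- sphere 0 1) = emeasure (lebesgue_on {0..<2*pi}) (cis -` (- sphere 0 1) \<inter> space (lebesgue_on {0..<2*pi}))"
    unfolding circle_measure_def
    by (rule emeasure_distr[OF cis_meas]) (auto intro: borel_open)
  also have "cis -` (- sphere 0 1) = {}" by auto
  finally show ?thesis by simp
qed

lemma circ_psf: "product_sigma_finite (\<lambda>_. circle_measure)"
  unfolding product_sigma_finite_def
  using circle_finite finite_measure.axioms(1) by blast

lemma AE_torus: "AE x in torus_measure n. x \<in> torus n"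
proof -
  have comp: "AE x in torus_measure n. x i \<in> sphere 0 1" if i: "i \<in> {1..n}" for i
  proof -
    define A where "A = (\<lambda>j. if j = i then - sphere (0::complex) 1 else UNIV)"
    have "A j \<in> sets circle_measure" for j
      by (auto simp: A_def intro: borel_open)
    then have S: "Pi\<^sub>E {1..n} A \<in> sets (torus_measure n)"
      unfolding torus_measure_def by (intro sets_PiM_I_finite) auto
    have E: "{x \<in> space (torus_measure n). \<not> x i \<in> sphere 0 1} = Pi\<^sub>E {1..n} A"
    proof (intro set_eqI iffI)
      fix x assume "x \<in> {x \<in> space (torus_measure n). \<not> x i \<in> sphere 0 1}"
      then show "x \<in> Pi\<^sub>E {1..n} A" by (auto simp: torus_measure_def space_PiM A_def PiE_iff)
    next
      fix x assume x: "x \<in> Pi\<^sub>E {1..n} A"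
      then have "x i \<in> A i" using i by (auto simp: PiE_iff)
      then have "\<not> x i \<in> sphere 0 1" by (simp add: A_def)
      moreover have "x \<in> space (torus_measure n)" using x
        by (auto simp: torus_measure_def space_PiM PiE_iff)
      ultimately show "x \<in> {x \<in> space (torus_measure n). \<not> x i \<in> sphere 0 1}" by simp
    qed
    have "emeasure (torus_measure n) (Pi\<^sub>E {1..n} A) = (\<Prod>j\<in>{1..n}. emeasure circle_measure (A j))"
      unfolding torus_measure_def
      by (rule product_sigma_finite.emeasure_PiM[OF circ_psf]) (auto simp: A_def intro: borel_open)
    also have "\<dots> = 0"
      using i circle_null by (intro prod_zero) (auto simp: A_def intro!: bexI[of _ i])
    finally show ?thesis using AE_iff_measurable[OF S E] by simp
  qed
  have "AE x in torus_measure n. \<forall>i\<in>{1..n}. x i \<in> sphere 0 1"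
    using comp by (subst AE_finite_all) auto
  moreover have "AE x in torus_measure n. x \<in> space (torus_measure n)" by (rule AE_space)
  ultimately show ?thesis
    by eventually_elim (auto simp: torus_def torus_measure_def space_PiM PiE_iff)
qed



lemma G_zero:
  assumes "\<tau> \<in> Gmpn m p n" "k \<notin> {1..n} \<or> j \<notin> {1..n}"
  shows "\<tau> k j = 0"
proof -
  obtain \<pi> \<zeta> where "\<pi> permutes {1..n}" and t: "\<tau> = (\<lambda>i j. if i \<in> {1..n} \<and> j = \<pi> i then \<zeta> i else 0)"
    using assms(1) unfolding Gmpn_def by blast
  then show ?thesis using assms(2) permutes_in_image[OF \<open>\<pi> permutes {1..n}\<close>] by auto
qed

lemma ginv_in:
  assumes m: "0 < m" and s: "\<sigma> \<in> Gmpn m p n"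
  shows "ginv n (Gmpn m p n) \<sigma> \<in> Gmpn m p n"
proof -
  let ?U = "{1..n}"
  obtain \<pi> \<zeta> where pi: "\<pi> permutes ?U" and z: "\<forall>i\<in>?U. \<zeta> i ^ m = 1"
    and zp: "(\<Prod>i\<in>?U. \<zeta> i) ^ (m div p) = 1"
    and sd: "\<sigma> = (\<lambda>i j. if i \<in> ?U \<and> j = \<pi> i then \<zeta> i else 0)"
    using s unfolding Gmpn_def by blast
  have znz: "\<zeta> i \<noteq> 0" if "i \<in> ?U" for i
    using z that m by (metis zero_neq_one power_0_left neq0_conv)
  have ipi: "inv \<pi> permutes ?U" using pi by (rule permutes_inv)
  define \<tau>0 where "\<tau>0 = (\<lambda>i j. if i \<in> ?U \<and> j = inv \<pi> i then inverse (\<zeta> (inv \<pi> i)) else 0)"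
  have t0G: "\<tau>0 \<in> Gmpn m p n"
  proof -
    have "\<forall>i\<in>?U. inverse (\<zeta> (inv \<pi> i)) ^ m = 1"
      using z permutes_in_image[OF ipi] by (simp add: power_inverse)
    moreover have "(\<Prod>i\<in>?U. inverse (\<zeta> (inv \<pi> i))) = inverse (\<Prod>i\<in>?U. \<zeta> i)"
    proof -
      have "(\<Prod>i\<in>?U. inverse (\<zeta> (inv \<pi> i))) = inverse (\<Prod>i\<in>?U. \<zeta> (inv \<pi> i))"
        using prod_inversef[of "\<lambda>i. \<zeta> (inv \<pi> i)" ?U] by (simp add: comp_def)
      also have "(\<Prod>i\<in>?U. \<zeta> (inv \<pi> i)) = (\<Prod>i\<in>?U. \<zeta> i)"
        using prod.permute[OF ipi, of \<zeta>] by (simp add: comp_def)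
      finally show ?thesis .
    qed
    moreover have "(inverse (\<Prod>i\<in>?U. \<zeta> i)) ^ (m div p) = 1"
      using zp by (simp add: power_inverse)
    moreover have "\<tau>0 = (\<lambda>i j. if i \<in> ?U \<and> j = inv \<pi> i then (\<lambda>i. inverse (\<zeta> (inv \<pi> i))) i else 0)"
      by (simp add: \<tau>0_def)
    ultimately have "inv \<pi> permutes ?U \<and> (\<forall>i\<in>?U. (\<lambda>i. inverse (\<zeta> (inv \<pi> i))) i ^ m = 1) \<and>
       (\<Prod>i\<in>?U. (\<lambda>i. inverse (\<zeta> (inv \<pi> i))) i) ^ (m div p) = 1 \<and>
       \<tau>0 = (\<lambda>i j. if i \<in> ?U \<and> j = inv \<pi> i then (\<lambda>i. inverse (\<zeta> (inv \<pi> i))) i else 0)"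
      using ipi by simp
    note X = this
    show ?thesis unfolding Gmpn_def
      by (rule CollectI, rule exI[of _ "inv \<pi>"], rule exI[of _ "\<lambda>i. inverse (\<zeta> (inv \<pi> i))"], rule X)
  qed
  have key: "\<sigma> i k * \<tau> k j = (if k = \<pi> i then \<zeta> i * \<tau> (\<pi> i) j else 0)" if "i \<in> ?U" for i k j and \<tau> :: "nat \<Rightarrow> nat \<Rightarrow> complex"
    using that by (auto simp: sd)
  have mm: "mmult n \<sigma> \<tau> i j = \<zeta> i * \<tau> (\<pi> i) j" if "i \<in> ?U" "j \<in> ?U" for i j \<tau>
  proof -
    have "mmult n \<sigma> \<tau> i j = (\<Sum>k\<in>?U. if k = \<pi> i then \<zeta> i * \<tau> (\<pi> i) j else 0)"
      using that key by (simp add: mmult_def)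
    also have "\<dots> = \<zeta> i * \<tau> (\<pi> i) j"
      using permutes_in_image[OF pi] that by (subst sum.delta) auto
    finally show ?thesis .
  qed
  have t0inv: "mmult n \<sigma> \<tau>0 = idm n"
  proof (intro ext)
    fix i j
    show "mmult n \<sigma> \<tau>0 i j = idm n i j"
    proof (cases "i \<in> ?U \<and> j \<in> ?U")
      case True
      have ii: "inv \<pi> (\<pi> i) = i" using permutes_inverses(2)[OF pi] by simp
      have piU: "\<pi> i \<in> ?U" using True permutes_in_image[OF pi] by simp
      have "\<tau>0 (\<pi> i) j = (if j = i then inverse (\<zeta> i) else 0)"
        using ii piU by (simp add: \<tau>0_def)
      then show ?thesis using mm[of i j \<tau>0] True znz[of i] by (simp add: idm_def)
    next
      case False
      have "mmult n \<sigma> \<tau>0 i j = 0" using False by (simp add: mmult_def del: atLeastAtMost_iff; blast)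
      moreover have "idm n i j = 0" using False by (simp add: idm_def del: atLeastAtMost_iff; blast)
      ultimately show ?thesis by simp
    qed
  qed
  have uniq: "\<tau> = \<tau>0" if tG: "\<tau> \<in> Gmpn m p n" and ti: "mmult n \<sigma> \<tau> = idm n" for \<tau>
  proof (intro ext)
    fix k j
    show "\<tau> k j = \<tau>0 k j"
    proof (cases "k \<in> ?U \<and> j \<in> ?U")
      case False
      then have kj: "k \<notin> ?U \<or> j \<notin> ?U" by blast
      have "\<tau> k j = 0" by (rule G_zero[OF tG kj])
      moreover have "\<tau>0 k j = 0" by (rule G_zero[OF t0G kj])
      ultimately show ?thesis by simp
    next
      case True
      define i where "i = inv \<pi> k"
      have iU: "i \<in> ?U" using True permutes_in_image[OF ipi] by (simp add: i_def)
      have pik: "\<pi> i = k" using permutes_inverses(1)[OF pi] by (simp add: i_def)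
      have "\<zeta> i * \<tau> k j = idm n i j" using mm[OF iU, of j \<tau>] True ti pik by simp
      then have "\<tau> k j = (if j = i then inverse (\<zeta> i) else 0)"
      proof (cases "j = i")
        case True
        then have "\<zeta> i * \<tau> k j = 1" using \<open>\<zeta> i * \<tau> k j = idm n i j\<close> iU by (simp add: idm_def)
        then have "\<tau> k j = inverse (\<zeta> i)" using znz[OF iU]
          by (metis inverse_unique mult.commute)
        then show ?thesis using True by simp
      next
        case False
        then have "\<zeta> i * \<tau> k j = 0" using \<open>\<zeta> i * \<tau> k j = idm n i j\<close> by (simp add: idm_def)
        then show ?thesis using znz[OF iU] False by simp
      qed
      then show ?thesis using True by (simp add: \<tau>0_def i_def)
    qed
  qed
  have "ginv n (Gmpn m p n) \<sigma> = \<tau>0"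
    unfolding ginv_def
  proof (rule the_equality)
    show "\<tau>0 \<in> Gmpn m p n \<and> mmult n \<sigma> \<tau>0 = idm n" using t0G t0inv by (rule conjI)
    fix \<tau> assume "\<tau> \<in> Gmpn m p n \<and> mmult n \<sigma> \<tau> = idm n"
    then show "\<tau> = \<tau>0" using uniq by blast
  qed
  then show ?thesis using t0G by simp
qed



lemma theta_mvec:
  assumes t: "\<tau> \<in> Gmpn m p n"
  shows "theta m p n i (mvec n \<tau> z) = theta m p n i z"
proof -
  let ?U = "{1..n}"
  obtain \<pi> \<zeta> where pi: "\<pi> permutes ?U" and z: "\<forall>i\<in>?U. \<zeta> i ^ m = 1"
    and zp: "(\<Prod>i\<in>?U. \<zeta> i) ^ (m div p) = 1"
    and sd: "\<tau> = (\<lambda>i j. if i \<in> ?U \<and> j = \<pi> i then \<zeta> i else 0)"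
    using t unfolding Gmpn_def by blast
  have w: "mvec n \<tau> z j = \<zeta> j * z (\<pi> j)" if "j \<in> ?U" for j
  proof -
    have "mvec n \<tau> z j = (\<Sum>k\<in>?U. (if k = \<pi> j then \<zeta> j else 0) * z k)"
      using that by (simp add: mvec_def sd)
    also have "\<dots> = (\<Sum>k\<in>?U. if k = \<pi> j then \<zeta> j * z k else 0)"
      by (intro sum.cong) auto
    also have "\<dots> = \<zeta> j * z (\<pi> j)"
      using permutes_in_image[OF pi] that by (subst sum.delta) auto
    finally show ?thesis .
  qed
  have pz: "(\<Prod>j\<in>?U. z (\<pi> j)) = (\<Prod>j\<in>?U. z j)"
    using prod.permute[OF pi, of z] by (simp add: comp_def)
  show ?thesis
  proof (cases "i = n")
    case True
    have "(\<Prod>j\<in>?U. mvec n \<tau> z j) = (\<Prod>j\<in>?U. \<zeta> j) * (\<Prod>j\<in>?U. z j)"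
      using w pz by (simp add: prod.distrib)
    then show ?thesis using True zp by (simp add: theta_def power_mult_distrib)
  next
    case False
    let ?K = "{S. S \<subseteq> ?U \<and> card S = i}"
    have inner: "(\<Prod>j\<in>S. mvec n \<tau> z j ^ m) = (\<Prod>j\<in>\<pi> ` S. z j ^ m)" if "S \<in> ?K" for S
    proof -
      have "(\<Prod>j\<in>S. mvec n \<tau> z j ^ m) = (\<Prod>j\<in>S. z (\<pi> j) ^ m)"
        using that w z by (intro prod.cong) (auto simp: power_mult_distrib)
      also have "\<dots> = (\<Prod>j\<in>\<pi> ` S. z j ^ m)"
        using permutes_inj[OF pi] by (subst prod.reindex) (auto intro: inj_on_subset)
      finally show ?thesis .
    qed
    have inj: "inj \<pi>" using permutes_inj[OF pi] .
    have "(\<Sum>S\<in>?K. \<Prod>j\<in>\<pi> ` S. z j ^ m) = (\<Sum>S\<in>?K. \<Prod>j\<in>S. z j ^ m)"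
    proof (rule sum.reindex_bij_witness[where i = "\<lambda>S. inv \<pi> ` S" and j = "\<lambda>S. \<pi> ` S"])
      fix S assume S: "S \<in> ?K"
      show "inv \<pi> ` \<pi> ` S = S" using inj by (simp add: image_comp)
      show "\<pi> ` S \<in> ?K" using S permutes_image[OF pi] card_image[OF inj_on_subset[OF inj]]
        by (auto dest: permutes_in_image[OF pi, THEN iffD2])
      show "inv \<pi> ` S \<in> ?K" using S permutes_in_image[OF permutes_inv[OF pi]]
        card_image[OF inj_on_subset[OF permutes_inj[OF permutes_inv[OF pi]]]] by auto
      show "\<pi> ` inv \<pi> ` S = S" using permutes_surj[OF pi] by (simp add: image_comp surj_iff)
      show "(\<Prod>j\<in>\<pi> ` S. z j ^ m) = (\<Prod>j\<in>\<pi> ` S. z j ^ m)" ..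
    qed
    then show ?thesis using False inner by (simp add: theta_def)
  qed
qed



lemma cont_coord[continuous_intros]: "continuous_on S (\<lambda>z::nat \<Rightarrow> 'b::topological_space. z j)"
  by (rule continuous_on_subset[OF continuous_on_product_coordinates]) simp

lemma theta_cont: "continuous_on S (theta m p n i)"
proof (cases "i = n")
  case True
  then show ?thesis unfolding theta_def by (simp add: continuous_intros)
next
  case False
  then show ?thesis unfolding theta_def by (simp add: continuous_intros)
qed

lemma torus_compact: "compact (torus n)"
proof -
  define S' where "S' = (\<lambda>i. if i \<in> {1..n} then sphere (0::complex) 1 else {undefined})"
  have eq: "torus n = PiE UNIV S'"
  proof (intro set_eqI iffI)
    fix x assume "x \<in> torus n"
    then show "x \<in> PiE UNIV S'" by (auto simp: torus_def S'_def PiE_iff extensional_def)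
  next
    fix x assume "x \<in> PiE UNIV S'"
    then have h: "x i \<in> S' i" for i by (simp add: PiE_iff)
    have "\<forall>i\<in>{1..n}. x i \<in> sphere 0 1" using h by (metis S'_def)
    moreover have "\<forall>i. i \<notin> {1..n} \<longrightarrow> x i = undefined" using h unfolding S'_def by (metis singletonD)
    ultimately show "x \<in> torus n" by (simp add: torus_def PiE_iff extensional_def)
  qed
  have "compactin (product_topology (\<lambda>_. euclidean) UNIV) (PiE UNIV S')"
    by (subst compactin_PiE) (auto simp: S'_def)
  then show ?thesis unfolding eq euclidean_product_topology by simp
qed

lemma torus_ne: "torus n \<noteq> {}"
proof -
  have "(\<lambda>i\<in>{1..n}. 1::complex) \<in> torus n" by (simp add: torus_def)
  then show ?thesis by blast
qed

lemma cont_bounded_torus: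
  assumes "continuous_on (torus n) (\<phi> :: (nat \<Rightarrow> complex) \<Rightarrow> complex)"
  shows "\<exists>C. \<forall>z\<in>torus n. cmod (\<phi> z) \<le> C"
proof -
  have "compact (\<phi> ` torus n)" by (rule compact_continuous_image[OF assms torus_compact])
  then have "bounded (\<phi> ` torus n)" by (rule compact_imp_bounded)
  then show ?thesis by (auto simp: bounded_iff)
qed

lemma comp_meas:
  assumes "j \<in> {1..n}"
  shows "(\<lambda>x. x j) \<in> borel_measurable (torus_measure n)"
proof -
  have "(\<lambda>x. x j) \<in> measurable (torus_measure n) circle_measure"
    unfolding torus_measure_def using assms by (rule measurable_component_singleton)
  moreover have "measurable (torus_measure n) circle_measure = measurable (torus_measure n) borel"
    by (rule measurable_cong_sets) simp_all
  ultimately show ?thesis by simp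
qed

lemma theta_meas[measurable]: "theta m p n i \<in> borel_measurable (torus_measure n)"
proof (cases "i = n")
  case True
  have "(\<lambda>x. (\<Prod>j\<in>{1..n}. x j) ^ (m div p)) \<in> borel_measurable (torus_measure n)"
    by (intro borel_measurable_power borel_measurable_prod comp_meas)
  then show ?thesis using True unfolding theta_def by simp
next
  case False
  have "(\<lambda>x. \<Sum>S\<in>{S. S \<subseteq> {1..n} \<and> card S = i}. \<Prod>j\<in>S. x j ^ m) \<in> borel_measurable (torus_measure n)"
  proof (rule borel_measurable_sum)
    fix S assume "S \<in> {S. S \<subseteq> {1..n} \<and> card S = i}"
    then have S: "S \<subseteq> {1..n}" by simp
    show "(\<lambda>x. \<Prod>j\<in>S. x j ^ m) \<in> borel_measurable (torus_measure n)"
    proof (rule borel_measurable_prod)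
      fix j assume "j \<in> S"
      then have "j \<in> {1..n}" using S by blast
      then show "(\<lambda>x. x j ^ m) \<in> borel_measurable (torus_measure n)"
        by (intro borel_measurable_power comp_meas)
    qed
  qed
  then show ?thesis using False unfolding theta_def by simp
qed

definition goodfun :: "nat \<Rightarrow> nat \<Rightarrow> nat \<Rightarrow> ((nat \<Rightarrow> complex) \<Rightarrow> complex) \<Rightarrow> bool" where
  "goodfun m p n \<phi> \<longleftrightarrow> \<phi> \<in> borel_measurable (torus_measure n) \<and> (\<exists>C. \<forall>z\<in>torus n. cmod (\<phi> z) \<le> C) \<and>
     (\<forall>z w. theta_map m p n z = theta_map m p n w \<longrightarrow> \<phi> z = \<phi> w)"

lemma theta_map_eqD: "theta_map m p n z = theta_map m p n w \<Longrightarrow> i \<in> {1..n} \<Longrightarrow> theta m p n i z = theta m p n i w"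
  unfolding theta_map_def by (metis restrict_apply')

lemma goodfun_const: "goodfun m p n (\<lambda>_. c)"
proof -
  have "(\<lambda>_. c) \<in> borel_measurable (torus_measure n)" by simp
  moreover have "\<exists>C. \<forall>z\<in>torus n. cmod c \<le> C" by blast
  ultimately show ?thesis unfolding goodfun_def by blast
qed

lemma goodfun_theta: assumes i: "i \<in> {1..n}" shows "goodfun m p n (theta m p n i)"
proof -
  obtain C where "\<forall>z\<in>torus n. cmod (theta m p n i z) \<le> C"
    using cont_bounded_torus[OF theta_cont] by blast
  moreover have "\<forall>z w. theta_map m p n z = theta_map m p n w \<longrightarrow> theta m p n i z = theta m p n i w"
    using theta_map_eqD[OF _ i] by blast
  ultimately show ?thesis unfolding goodfun_def using theta_meas by blast
qed

lemma goodfun_cnj_theta: assumes i: "i \<in> {1..n}" shows "goodfun m p n (\<lambda>z. cnj (theta m p n i z))"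
proof -
  have "continuous_on (torus n) (\<lambda>z. cnj (theta m p n i z))"
    by (intro continuous_intros theta_cont)
  then obtain C where "\<forall>z\<in>torus n. cmod (cnj (theta m p n i z)) \<le> C"
    using cont_bounded_torus by blast
  moreover have "\<forall>z w. theta_map m p n z = theta_map m p n w \<longrightarrow> cnj (theta m p n i z) = cnj (theta m p n i w)"
    using theta_map_eqD[OF _ i] by metis
  moreover have "(\<lambda>z. cnj (theta m p n i z)) \<in> borel_measurable (torus_measure n)"
    by (rule borel_measurable_continuous_on[OF continuous_on_cnj[OF continuous_on_id] theta_meas])
  ultimately show ?thesis unfolding goodfun_def by blast
qed

lemma goodfun_AE_bound:
  assumes "goodfun m p n \<phi>"
  shows "\<exists>C\<ge>0. AE x in torus_measure n. cmod (\<phi> x) \<le> C"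
proof -
  obtain C where C: "\<forall>z\<in>torus n. cmod (\<phi> z) \<le> C" using assms unfolding goodfun_def by blast
  have z0: "(\<lambda>i\<in>{1..n}. 1::complex) \<in> torus n" by (simp add: torus_def)
  have "0 \<le> cmod (\<phi> (\<lambda>i\<in>{1..n}. 1::complex))" by simp
  also have "\<dots> \<le> C" using C z0 by blast
  finally have "C \<ge> 0" .
  moreover have "AE x in torus_measure n. cmod (\<phi> x) \<le> C"
    using AE_torus by eventually_elim (use C in blast)
  ultimately show ?thesis by blast
qed

lemma L2_zero: "(\<lambda>_. 0) \<in> L2 M"
  unfolding L2_def by simp

lemma sq_sum_le: "((a::real) + b)^2 \<le> 2 * a^2 + 2 * b^2"
proof -
  have "0 \<le> (a - b)^2" by simp
  then show ?thesis by (simp add: power2_sum power2_diff)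
qed

lemma L2_add:
  assumes "f \<in> L2 M" "g \<in> L2 M"
  shows "(\<lambda>x. f x + g x) \<in> L2 M"
proof -
  have m: "f \<in> borel_measurable M" "g \<in> borel_measurable M" and
    i: "integrable M (\<lambda>x. (cmod (f x))^2)" "integrable M (\<lambda>x. (cmod (g x))^2)"
    using assms unfolding L2_def by blast+
  have int: "integrable M (\<lambda>x. 2 * (cmod (f x))^2 + 2 * (cmod (g x))^2)"
    using i by (intro Bochner_Integration.integrable_add Bochner_Integration.integrable_mult_right)
  have le: "norm ((cmod (f x + g x))^2) \<le> norm (2 * (cmod (f x))^2 + 2 * (cmod (g x))^2)" for x
  proof -
    have "cmod (f x + g x) \<le> cmod (f x) + cmod (g x)" by (rule norm_triangle_ineq)
    then have "(cmod (f x + g x))^2 \<le> (cmod (f x) + cmod (g x))^2"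
      by (intro power_mono) auto
    also have "\<dots> \<le> 2 * (cmod (f x))^2 + 2 * (cmod (g x))^2" by (rule sq_sum_le)
    finally show ?thesis by simp
  qed
  have mb: "(\<lambda>x. (cmod (f x + g x))^2) \<in> borel_measurable M" using m by measurable
  have "integrable M (\<lambda>x. (cmod (f x + g x))^2)"
    by (rule Bochner_Integration.integrable_bound[OF int mb]) (rule AE_I2[OF le])
  moreover have "(\<lambda>x. f x + g x) \<in> borel_measurable M" using m by measurable
  ultimately show ?thesis unfolding L2_def by blast
qed

lemma L2_mult:
  assumes "f \<in> L2 M" "\<phi> \<in> borel_measurable M" "AE x in M. cmod (\<phi> x) \<le> C"
  shows "(\<lambda>x. \<phi> x * f x) \<in> L2 M"
proof -
  have m: "f \<in> borel_measurable M" and i: "integrable M (\<lambda>x. (cmod (f x))^2)"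
    using assms unfolding L2_def by blast+
  have int: "integrable M (\<lambda>x. C^2 * (cmod (f x))^2)" using i by (rule integrable_mult_right)
  have ae: "AE x in M. norm ((cmod (\<phi> x * f x))^2) \<le> norm (C^2 * (cmod (f x))^2)"
    using assms(3)
  proof eventually_elim
    case (elim x)
    have "(cmod (\<phi> x))^2 \<le> C^2" using elim by (intro power_mono) auto
    then have "(cmod (\<phi> x))^2 * (cmod (f x))^2 \<le> C^2 * (cmod (f x))^2"
      by (intro mult_right_mono) auto
    then show ?case by (simp add: norm_mult power_mult_distrib)
  qed
  have mb: "(\<lambda>x. (cmod (\<phi> x * f x))^2) \<in> borel_measurable M" using m assms(2) by measurable
  have "integrable M (\<lambda>x. (cmod (\<phi> x * f x))^2)"
    by (rule Bochner_Integration.integrable_bound[OF int mb ae])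
  moreover have "(\<lambda>x. \<phi> x * f x) \<in> borel_measurable M" using m assms(2) by measurable
  ultimately show ?thesis unfolding L2_def by blast
qed

lemma L2_norm_mult:
  assumes "f \<in> L2 M" "(\<lambda>x. \<phi> x * f x) \<in> L2 M" "AE x in M. cmod (\<phi> x) \<le> C" "C \<ge> 0"
  shows "L2_norm M (\<lambda>x. \<phi> x * f x) \<le> C * L2_norm M f"
proof -
  have i1: "integrable M (\<lambda>x. (cmod (f x))^2)" and i2: "integrable M (\<lambda>x. (cmod (\<phi> x * f x))^2)"
    using assms unfolding L2_def by blast+
  have ae: "AE x in M. (cmod (\<phi> x * f x))^2 \<le> C^2 * (cmod (f x))^2"
    using assms(3)
  proof eventually_elim
    case (elim x)
    have "(cmod (\<phi> x))^2 \<le> C^2" using elim by (intro power_mono) auto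
    then have "(cmod (\<phi> x))^2 * (cmod (f x))^2 \<le> C^2 * (cmod (f x))^2"
      by (intro mult_right_mono) auto
    then show ?case by (simp add: norm_mult power_mult_distrib)
  qed
  have "integral\<^sup>L M (\<lambda>x. (cmod (\<phi> x * f x))^2) \<le> integral\<^sup>L M (\<lambda>x. C^2 * (cmod (f x))^2)"
    by (rule integral_mono_AE[OF i2 integrable_mult_right[OF i1] ae])
  also have "\<dots> = C^2 * integral\<^sup>L M (\<lambda>x. (cmod (f x))^2)" using i1 by (rule Bochner_Integration.integral_mult_right)
  finally have "sqrt (integral\<^sup>L M (\<lambda>x. (cmod (\<phi> x * f x))^2)) \<le> sqrt (C^2 * integral\<^sup>L M (\<lambda>x. (cmod (f x))^2))"
    by (rule real_sqrt_le_mono)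
  also have "\<dots> = C * sqrt (integral\<^sup>L M (\<lambda>x. (cmod (f x))^2))"
    using assms(4) by (simp add: real_sqrt_mult)
  finally show ?thesis unfolding L2_norm_def .
qed



definition keps :: "nat \<Rightarrow> nat set \<Rightarrow> complex" where
  "keps j S = (-1) ^ card {i\<in>S. i < j}"

lemma card_lt_insert:
  assumes "finite P" "i \<notin> P"
  shows "card {t \<in> insert i P. t < q} = card {t\<in>P. t < q} + (if i < q then 1 else 0)"
proof (cases "i < q")
  case True
  then have "{t \<in> insert i P. t < q} = insert i {t\<in>P. t < q}" by auto
  then show ?thesis using True assms by simp
next
  case False
  then have "{t \<in> insert i P. t < q} = {t\<in>P. t < q}" by auto
  then show ?thesis using False by simp
qed

lemma keps_sq: "keps j T * keps j T = 1"
  unfolding keps_def by (simp flip: power_mult_distrib)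

lemma keps_sign:
  assumes S: "finite S" and j: "j \<in> S" and i: "i \<notin> S"
  shows "keps j S * keps i (insert i (S - {j})) = - (keps i (insert i S) * keps j (insert i S))"
proof -
  define P where "P = S - {j}"
  have fP: "finite P" using S by (simp add: P_def)
  have jP: "j \<notin> P" by (simp add: P_def)
  have iP: "i \<notin> P" using i by (simp add: P_def)
  have SP: "S = insert j P" using j by (auto simp: P_def)
  have ij: "i \<noteq> j" using i j by auto
  have c1: "card {t\<in>S. t < j} = card {t\<in>P. t < j}"
    unfolding SP using card_lt_insert[OF fP jP, of j] by simp
  have c2: "card {t\<in>insert i (S - {j}). t < i} = card {t\<in>P. t < i}"
    using card_lt_insert[OF fP iP, of i] by (simp add: P_def[symmetric])
  have c3: "card {t\<in>insert i S. t < i} = card {t\<in>P. t < i} + (if j < i then 1 else 0)"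
    using card_lt_insert[OF _ , of "insert j P" i i] card_lt_insert[OF fP jP, of i] fP iP ij
    unfolding SP by simp
  have c4: "card {t\<in>insert i S. t < j} = card {t\<in>P. t < j} + (if i < j then 1 else 0)"
    using card_lt_insert[OF _ , of "insert j P" i j] card_lt_insert[OF fP jP, of j] fP iP ij
    unfolding SP by simp
  define a where "a = card {t\<in>P. t < j}"
  define b where "b = card {t\<in>P. t < i}"
  have "keps j S * keps i (insert i (S - {j})) = (-1) ^ (a + b)"
    unfolding keps_def c1 c2 a_def b_def by (simp add: power_add)
  moreover have "keps i (insert i S) * keps j (insert i S) = (-1) ^ (a + b + 1)"
  proof (cases "i < j")
    case True
    then have "\<not> j < i" by simp
    then show ?thesis unfolding keps_def c3 c4 a_def b_def using True by (simp add: power_add)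
  next
    case False
    then have "j < i" using ij by simp
    then show ?thesis unfolding keps_def c3 c4 a_def b_def using False by (simp add: power_add)
  qed
  ultimately show ?thesis by simp
qed

lemma koszul_key:
  fixes A B :: "nat \<Rightarrow> complex" and \<Omega> :: "nat set \<Rightarrow> complex"
  assumes U: "finite U" and SU: "S \<subseteq> U"
  shows "(\<Sum>j\<in>S. keps j S * (A j * (\<Sum>i\<in>U-(S-{j}). keps i (insert i (S-{j})) * (B i * \<Omega> (insert i (S-{j})))))) +
         (\<Sum>i\<in>U-S. keps i (insert i S) * (B i * (\<Sum>j\<in>insert i S. keps j (insert i S) * (A j * \<Omega> (insert i S - {j})))))
         = (\<Sum>j\<in>U. A j * B j) * \<Omega> S"
proof -
  have fS: "finite S" using U SU by (rule finite_subset[rotated])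
  have fUS: "finite (U - S)" using U by simp
  define X where "X = (\<lambda>j i. keps j S * keps i (insert i (S-{j})) * A j * B i * \<Omega> (insert i (S-{j})))"
  define Y where "Y = (\<lambda>i j. keps i (insert i S) * keps j (insert i S) * B i * A j * \<Omega> (insert i (S-{j})))"
  have XY: "X j i = - Y i j" if "j \<in> S" "i \<in> U - S" for i j
    using keps_sign[OF fS that(1), of i] that unfolding X_def Y_def
    by (simp add: algebra_simps)
  have T1: "keps j S * (A j * (\<Sum>i\<in>U-(S-{j}). keps i (insert i (S-{j})) * (B i * \<Omega> (insert i (S-{j})))))
      = A j * B j * \<Omega> S + (\<Sum>i\<in>U-S. X j i)" if j: "j \<in> S" for j
  proof -
    have e: "U-(S-{j}) = insert j (U-S)" using j SU by auto
    have ins: "insert j (S - {j}) = S" using j by auto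
    have "(\<Sum>i\<in>U-(S-{j}). keps i (insert i (S-{j})) * (B i * \<Omega> (insert i (S-{j}))))
        = keps j S * (B j * \<Omega> S) + (\<Sum>i\<in>U-S. keps i (insert i (S-{j})) * (B i * \<Omega> (insert i (S-{j}))))"
      unfolding e using fUS j ins by (subst sum.insert) auto
    then have "keps j S * (A j * (\<Sum>i\<in>U-(S-{j}). keps i (insert i (S-{j})) * (B i * \<Omega> (insert i (S-{j})))))
      = (keps j S * keps j S) * A j * B j * \<Omega> S + (\<Sum>i\<in>U-S. X j i)"
      unfolding X_def by (simp add: algebra_simps sum_distrib_left)
    then show ?thesis using keps_sq by simp
  qed
  have T2: "keps i (insert i S) * (B i * (\<Sum>j\<in>insert i S. keps j (insert i S) * (A j * \<Omega> (insert i S - {j}))))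
      = A i * B i * \<Omega> S + (\<Sum>j\<in>S. Y i j)" if i: "i \<in> U - S" for i
  proof -
    have iS: "i \<notin> S" using i by simp
    have d: "insert i S - {i} = S" using iS by auto
    have d2: "insert i S - {j} = insert i (S - {j})" if "j \<in> S" for j using that iS by auto
    have "(\<Sum>j\<in>insert i S. keps j (insert i S) * (A j * \<Omega> (insert i S - {j})))
        = keps i (insert i S) * (A i * \<Omega> S) + (\<Sum>j\<in>S. keps j (insert i S) * (A j * \<Omega> (insert i (S - {j}))))"
      using fS iS d d2 by (simp add: sum.insert)
    then have "keps i (insert i S) * (B i * (\<Sum>j\<in>insert i S. keps j (insert i S) * (A j * \<Omega> (insert i S - {j}))))
      = (keps i (insert i S) * keps i (insert i S)) * A i * B i * \<Omega> S + (\<Sum>j\<in>S. Y i j)"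
      unfolding Y_def by (simp add: algebra_simps sum_distrib_left)
    then show ?thesis using keps_sq by simp
  qed
  have "(\<Sum>j\<in>S. keps j S * (A j * (\<Sum>i\<in>U-(S-{j}). keps i (insert i (S-{j})) * (B i * \<Omega> (insert i (S-{j}))))))
      = (\<Sum>j\<in>S. A j * B j * \<Omega> S) + (\<Sum>j\<in>S. \<Sum>i\<in>U-S. X j i)"
    using T1 by (simp add: sum.distrib)
  moreover have "(\<Sum>i\<in>U-S. keps i (insert i S) * (B i * (\<Sum>j\<in>insert i S. keps j (insert i S) * (A j * \<Omega> (insert i S - {j})))))
      = (\<Sum>i\<in>U-S. A i * B i * \<Omega> S) + (\<Sum>i\<in>U-S. \<Sum>j\<in>S. Y i j)"
    using T2 by (simp add: sum.distrib)
  moreover have "(\<Sum>i\<in>U-S. \<Sum>j\<in>S. Y i j) = - (\<Sum>j\<in>S. \<Sum>i\<in>U-S. X j i)"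
  proof -
    have "(\<Sum>i\<in>U-S. \<Sum>j\<in>S. Y i j) = (\<Sum>j\<in>S. \<Sum>i\<in>U-S. Y i j)" by (rule sum.swap)
    also have "\<dots> = (\<Sum>j\<in>S. \<Sum>i\<in>U-S. - X j i)"
      using XY by (intro sum.cong refl) (simp)
    also have "\<dots> = - (\<Sum>j\<in>S. \<Sum>i\<in>U-S. X j i)" by (simp add: sum_negf)
    finally show ?thesis .
  qed
  moreover have "(\<Sum>j\<in>U. A j * B j) = (\<Sum>j\<in>U-S. A j * B j) + (\<Sum>j\<in>S. A j * B j)"
    using sum.subset_diff[OF SU U] .
  moreover have "(\<Sum>j\<in>S. A j * B j * \<Omega> S) = (\<Sum>j\<in>S. A j * B j) * \<Omega> S"
    by (simp add: sum_distrib_right)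
  moreover have "(\<Sum>j\<in>U-S. A j * B j * \<Omega> S) = (\<Sum>j\<in>U-S. A j * B j) * \<Omega> S"
    by (simp add: sum_distrib_right)
  ultimately show ?thesis by (simp add: distrib_right)
qed



definition goodH :: "nat \<Rightarrow> nat \<Rightarrow> nat \<Rightarrow> ((nat \<Rightarrow> complex) \<Rightarrow> complex) set \<Rightarrow> bool" where
  "goodH m p n H \<longleftrightarrow> H \<subseteq> L2 (torus_measure n) \<and> (\<lambda>_. 0) \<in> H \<and>
     (\<forall>f\<in>H. \<forall>g\<in>H. (\<lambda>x. f x + g x) \<in> H) \<and>
     (\<forall>\<phi> f. goodfun m p n \<phi> \<longrightarrow> f \<in> H \<longrightarrow> (\<lambda>x. \<phi> x * f x) \<in> H)"

lemma goodH_sub: "goodH m p n H \<Longrightarrow> H \<subseteq> L2 (torus_measure n)"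
  unfolding goodH_def by (rule conjunct1)
lemma goodH_zero: "goodH m p n H \<Longrightarrow> (\<lambda>_. 0) \<in> H"
  unfolding goodH_def by (drule conjunct2, rule conjunct1)
lemma goodH_add': "goodH m p n H \<Longrightarrow> \<forall>f\<in>H. \<forall>g\<in>H. (\<lambda>x. f x + g x) \<in> H"
  unfolding goodH_def by (drule conjunct2, drule conjunct2, rule conjunct1)
lemma goodH_mult': "goodH m p n H \<Longrightarrow> \<forall>\<phi> f. goodfun m p n \<phi> \<longrightarrow> f \<in> H \<longrightarrow> (\<lambda>x. \<phi> x * f x) \<in> H"
  unfolding goodH_def by (drule conjunct2, drule conjunct2, rule conjunct2)

lemma goodH_add: "goodH m p n H \<Longrightarrow> f \<in> H \<Longrightarrow> g \<in> H \<Longrightarrow> (\<lambda>x. f x + g x) \<in> H"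
  using goodH_add' by blast

lemma goodH_mult: "goodH m p n H \<Longrightarrow> goodfun m p n \<phi> \<Longrightarrow> f \<in> H \<Longrightarrow> (\<lambda>x. \<phi> x * f x) \<in> H"
  using goodH_mult' by blast

lemma goodH_sum:
  assumes H: "goodH m p n H" and I: "finite I"
  shows "(\<forall>i\<in>I. f i \<in> H) \<Longrightarrow> (\<lambda>x. \<Sum>i\<in>I. f i x) \<in> H"
  using I
proof (induction I rule: finite_induct)
  case empty
  show ?case using goodH_zero[OF H] by simp
next
  case (insert a I)
  have "f a \<in> H" using insert.prems by blast
  moreover have "(\<lambda>x. \<Sum>i\<in>I. f i x) \<in> H" using insert.IH insert.prems by blast
  ultimately have "(\<lambda>x. f a x + (\<Sum>i\<in>I. f i x)) \<in> H" by (rule goodH_add[OF H])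
  then show ?case using insert.hyps by simp
qed

lemma goodH_scal: assumes "goodH m p n H" "f \<in> H" shows "(\<lambda>x. c * f x) \<in> H"
  by (rule goodH_mult[OF assms(1) goodfun_const assms(2)])

lemma goodH_L2: "goodH m p n H \<Longrightarrow> f \<in> H \<Longrightarrow> f \<in> L2 (torus_measure n)"
  using goodH_sub by blast

lemma ae_eq_refl_fun: "f = g \<Longrightarrow> ae_eq M f g"
  unfolding ae_eq_def by simp

lemma mult_bounded:
  assumes H: "goodH m p n H" and \<phi>: "goodfun m p n \<phi>"
  shows "bounded_op (torus_measure n) H (mult_op \<phi>)"
proof -
  obtain C where C: "C \<ge> 0" "AE x in torus_measure n. cmod (\<phi> x) \<le> C"
    using goodfun_AE_bound[OF \<phi>] by blast
  have mH: "mult_op \<phi> f \<in> H" if "f \<in> H" for f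
    unfolding mult_op_def by (rule goodH_mult[OF H \<phi> that])
  have "\<forall>f\<in>H. \<forall>g\<in>H. ae_eq (torus_measure n) f g \<longrightarrow> ae_eq (torus_measure n) (mult_op \<phi> f) (mult_op \<phi> g)"
    unfolding ae_eq_def mult_op_def
  proof (intro ballI impI)
    fix f g :: "(nat \<Rightarrow> complex) \<Rightarrow> complex"
    assume "AE x in torus_measure n. f x = g x"
    then show "AE x in torus_measure n. \<phi> x * f x = \<phi> x * g x" by eventually_elim simp
  qed
  moreover have "\<forall>f\<in>H. \<forall>g\<in>H. ae_eq (torus_measure n) (mult_op \<phi> (\<lambda>x. f x + g x)) (\<lambda>x. mult_op \<phi> f x + mult_op \<phi> g x)"
    unfolding mult_op_def by (intro ballI ae_eq_refl_fun) (simp add: distrib_left)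
  moreover have "\<forall>c. \<forall>f\<in>H. ae_eq (torus_measure n) (mult_op \<phi> (\<lambda>x. c * f x)) (\<lambda>x. c * mult_op \<phi> f x)"
    unfolding mult_op_def by (intro allI ballI ae_eq_refl_fun) (simp add: mult_ac)
  moreover have "\<forall>f\<in>H. L2_norm (torus_measure n) (mult_op \<phi> f) \<le> C * L2_norm (torus_measure n) f"
  proof
    fix f assume f: "f \<in> H"
    show "L2_norm (torus_measure n) (mult_op \<phi> f) \<le> C * L2_norm (torus_measure n) f"
      unfolding mult_op_def
      by (rule L2_norm_mult[OF goodH_L2[OF H f] goodH_L2[OF H goodH_mult[OF H \<phi> f]] C(2) C(1)])
  qed
  ultimately show ?thesis unfolding bounded_op_def using mH by blast
qed

lemma mult_normal:
  assumes H: "goodH m p n H" and \<phi>: "goodfun m p n \<phi>" and \<psi>: "goodfun m p n (\<lambda>z. cnj (\<phi> z))"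
  shows "normal_op (torus_measure n) H (mult_op \<phi>)"
proof -
  have "\<forall>f\<in>H. \<forall>g\<in>H. L2_inner (torus_measure n) (mult_op \<phi> f) g = L2_inner (torus_measure n) f (mult_op (\<lambda>z. cnj (\<phi> z)) g)"
    unfolding L2_inner_def mult_op_def by (simp add: mult_ac)
  moreover have "\<forall>f\<in>H. ae_eq (torus_measure n) (mult_op \<phi> (mult_op (\<lambda>z. cnj (\<phi> z)) f)) (mult_op (\<lambda>z. cnj (\<phi> z)) (mult_op \<phi> f))"
    unfolding mult_op_def by (intro ballI ae_eq_refl_fun) (simp add: mult_ac)
  ultimately show ?thesis unfolding normal_op_def
    using mult_bounded[OF H \<phi>] mult_bounded[OF H \<psi>] by blast
qed

lemma kd_mult:
  "koszul_d (\<lambda>i. mult_op (th i)) l \<omega> S x = (\<Sum>j\<in>S. keps j S * ((th j x - l j) * \<omega> (S - {j}) x))"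
  unfolding koszul_d_def mult_op_def keps_def by (simp add: algebra_simps)

lemma homotopy_ae:
  fixes \<omega> :: "nat set \<Rightarrow> 'a \<Rightarrow> complex"
  assumes U: "finite U" and SU: "S \<subseteq> U" and cS: "card S = k"
    and closed: "\<forall>S'. S' \<subseteq> U \<and> card S' = k + 1 \<longrightarrow> ae_eq M (koszul_d (\<lambda>i. mult_op (th i)) l \<omega> S') (\<lambda>_. 0)"
    and one: "AE x in M. (\<Sum>j\<in>U. (th j x - l j) * b j x) = 1"
  shows "AE x in M. koszul_d (\<lambda>i. mult_op (th i)) l
            (\<lambda>R x. \<Sum>i\<in>U-R. keps i (insert i R) * (b i x * \<omega> (insert i R) x)) S x = \<omega> S x"
proof -
  have fS: "finite S" using U SU by (rule finite_subset[rotated])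
  have "\<forall>i\<in>U-S. AE x in M. koszul_d (\<lambda>i. mult_op (th i)) l \<omega> (insert i S) x = 0"
  proof
    fix i assume i: "i \<in> U - S"
    have "insert i S \<subseteq> U" "card (insert i S) = k + 1" using i SU fS cS by auto
    then show "AE x in M. koszul_d (\<lambda>i. mult_op (th i)) l \<omega> (insert i S) x = 0"
      using closed unfolding ae_eq_def by blast
  qed
  then have "AE x in M. \<forall>i\<in>U-S. koszul_d (\<lambda>i. mult_op (th i)) l \<omega> (insert i S) x = 0"
    using U by (subst AE_finite_all) auto
  with one show ?thesis
  proof eventually_elim
    case (elim x)
    note key = koszul_key[OF U SU, of "\<lambda>j. th j x - l j" "\<lambda>j. b j x" "\<lambda>R. \<omega> R x"]
    have L2: "(\<Sum>i\<in>U-S. keps i (insert i S) * (b i x * (\<Sum>j\<in>insert i S. keps j (insert i S) * ((th j x - l j) * \<omega> (insert i S - {j}) x)))) = 0"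
      using elim(2) by (simp add: kd_mult)
    show ?case using key L2 elim(1) by (simp add: kd_mult)
  qed
qed



lemma spectrum_sub:
  assumes H: "goodH m p n H"
  shows "taylor_spectrum (torus_measure n) H n (\<lambda>i. mult_op (theta m p n i)) \<subseteq> dist_boundary m p n"
proof
  fix l assume l: "l \<in> taylor_spectrum (torus_measure n) H n (\<lambda>i. mult_op (theta m p n i))"
  then have lext: "l \<in> extensional {1..n}"
    and nex: "\<exists>k\<le>n. \<not> koszul_exact_at (torus_measure n) H n (\<lambda>i. mult_op (theta m p n i)) l k"
    unfolding taylor_spectrum_def by blast+
  show "l \<in> dist_boundary m p n"
  proof (rule ccontr)
    assume nl: "l \<notin> dist_boundary m p n"
    define U where "U = {1..n::nat}"
    define a where "a = (\<lambda>j x. theta m p n j x - l j)"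
    define N where "N = (\<lambda>x. \<Sum>j\<in>U. (cmod (a j x))^2)"
    define b where "b = (\<lambda>j x. cnj (a j x) / complex_of_real (N x))"
    have Ncont: "continuous_on (torus n) N" unfolding N_def a_def
      by (intro continuous_intros theta_cont)
    obtain z0 where z0: "z0 \<in> torus n" "\<forall>z\<in>torus n. N z0 \<le> N z"
      using continuous_attains_inf[OF torus_compact torus_ne Ncont] by blast
    have Npos: "N z0 > 0"
    proof (rule ccontr)
      assume "\<not> N z0 > 0"
      moreover have "N z0 \<ge> 0" unfolding N_def by (intro sum_nonneg) simp
      ultimately have "N z0 = 0" by simp
      then have "\<forall>j\<in>U. (cmod (a j z0))^2 = 0"
        unfolding N_def using sum_nonneg_eq_0_iff[of U "\<lambda>j. (cmod (a j z0))^2"] by (simp add: U_def)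
      then have eq: "\<forall>j\<in>U. theta m p n j z0 = l j" by (simp add: a_def)
      have "theta_map m p n z0 = l"
      proof
        fix i show "theta_map m p n z0 i = l i"
        proof (cases "i \<in> U")
          case True
          then show ?thesis using eq by (simp add: theta_map_def U_def)
        next
          case False
          then have iU: "i \<notin> {1..n}" by (simp add: U_def)
          then have "theta_map m p n z0 i = undefined" unfolding theta_map_def by (simp only: restrict_def if_not_P[OF iU] if_False)
          moreover have "l i = undefined" by (rule extensional_arb[OF lext iU])
          ultimately show ?thesis by simp
        qed
      qed
      then have "l \<in> dist_boundary m p n" using z0(1) unfolding dist_boundary_def by blast
      with nl show False by simp
    qed
    have Nge: "N z \<ge> N z0" if "z \<in> torus n" for z using z0(2) that by blast
    have Nnz: "complex_of_real (N z) \<noteq> 0" if "z \<in> torus n" for z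
      using Nge[OF that] Npos by simp
    have bgood: "goodfun m p n (b j)" if j: "j \<in> U" for j
    proof -
      have ma: "a i \<in> borel_measurable (torus_measure n)" for i
        unfolding a_def by measurable
      have m1: "(\<lambda>x. cnj (a j x)) \<in> borel_measurable (torus_measure n)"
        by (rule borel_measurable_continuous_on[OF continuous_on_cnj[OF continuous_on_id] ma])
      have mN: "N \<in> borel_measurable (torus_measure n)"
        unfolding N_def using ma by measurable
      have m2: "(\<lambda>x. complex_of_real (N x)) \<in> borel_measurable (torus_measure n)"
        by (rule borel_measurable_continuous_on[OF continuous_on_of_real[OF continuous_on_id] mN])
      have "b j \<in> borel_measurable (torus_measure n)"
        unfolding b_def using m1 m2 by (rule borel_measurable_divide)
      moreover have "continuous_on (torus n) (b j)"
        unfolding b_def using Nnz unfolding N_def a_def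
        by (intro continuous_intros theta_cont) auto
      then have "\<exists>C. \<forall>z\<in>torus n. cmod (b j z) \<le> C" by (rule cont_bounded_torus)
      moreover have "\<forall>z w. theta_map m p n z = theta_map m p n w \<longrightarrow> b j z = b j w"
      proof (intro allI impI)
        fix z w assume e: "theta_map m p n z = theta_map m p n w"
        have aa: "a i z = a i w" if "i \<in> U" for i
          using theta_map_eqD[OF e, of i] that by (simp add: a_def U_def)
        have "N z = N w" unfolding N_def using aa by (intro sum.cong) auto
        then show "b j z = b j w" unfolding b_def using aa[OF j] by simp
      qed
      ultimately show ?thesis unfolding goodfun_def by blast
    qed
    have one: "AE x in torus_measure n. (\<Sum>j\<in>U. (theta m p n j x - l j) * b j x) = 1"
      using AE_torus
    proof eventually_elim
      case (elim x)
      have "(\<Sum>j\<in>U. (theta m p n j x - l j) * b j x) = (\<Sum>j\<in>U. a j x * cnj (a j x)) / complex_of_real (N x)"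
        unfolding b_def a_def by (simp add: sum_divide_distrib)
      also have "(\<Sum>j\<in>U. a j x * cnj (a j x)) = complex_of_real (N x)"
      proof -
        have "(\<Sum>j\<in>U. a j x * cnj (a j x)) = (\<Sum>j\<in>U. complex_of_real ((cmod (a j x))^2))"
          by (intro sum.cong refl) (rule complex_norm_square[symmetric])
        also have "\<dots> = complex_of_real (N x)" unfolding N_def by (rule of_real_sum[symmetric])
        finally show ?thesis .
      qed
      finally show ?case using Nnz[OF elim] by simp
    qed
    have exact: "koszul_exact_at (torus_measure n) H n (\<lambda>i. mult_op (theta m p n i)) l k" for k
      unfolding koszul_exact_at_def
    proof (intro allI impI)
      fix \<omega> assume asm: "cochain H n k \<omega> \<and>
          (\<forall>S. S \<subseteq> {1..n} \<and> card S = k + 1 \<longrightarrow>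
               ae_eq (torus_measure n) (koszul_d (\<lambda>i. mult_op (theta m p n i)) l \<omega> S) (\<lambda>_. 0))"
      then have coch: "cochain H n k \<omega>"
        and closed: "\<forall>S. S \<subseteq> U \<and> card S = k + 1 \<longrightarrow>
               ae_eq (torus_measure n) (koszul_d (\<lambda>i. mult_op (theta m p n i)) l \<omega> S) (\<lambda>_. 0)"
        unfolding U_def by blast+
      define \<eta> where "\<eta> = (\<lambda>R x. \<Sum>i\<in>U-R. keps i (insert i R) * (b i x * \<omega> (insert i R) x))"
      have fU: "finite U" by (simp add: U_def)
      have hom: "ae_eq (torus_measure n) (koszul_d (\<lambda>i. mult_op (theta m p n i)) l \<eta> S) (\<omega> S)"
        if "S \<subseteq> U" "card S = k" for S
        unfolding ae_eq_def \<eta>_def by (rule homotopy_ae[OF fU that closed one])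
      show "if k = 0 then ae_eq (torus_measure n) (\<omega> {}) (\<lambda>_. 0)
           else (\<exists>\<eta>. cochain H n (k - 1) \<eta> \<and>
                   (\<forall>S. S \<subseteq> {1..n} \<and> card S = k \<longrightarrow>
                     ae_eq (torus_measure n) (koszul_d (\<lambda>i. mult_op (theta m p n i)) l \<eta> S) (\<omega> S)))"
      proof (cases "k = 0")
        case True
        have "ae_eq (torus_measure n) (koszul_d (\<lambda>i. mult_op (theta m p n i)) l \<eta> {}) (\<omega> {})"
          using hom[of "{}"] True by simp
        then have "AE x in torus_measure n. (0::complex) = \<omega> {} x"
          unfolding ae_eq_def by (simp add: koszul_d_def)
        then have "ae_eq (torus_measure n) (\<omega> {}) (\<lambda>_. 0)"
          unfolding ae_eq_def by eventually_elim simp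
        then show ?thesis using True by simp
      next
        case False
        have "cochain H n (k - 1) \<eta>"
          unfolding cochain_def
        proof (intro allI impI)
          fix R assume R: "R \<subseteq> {1..n} \<and> card R = k - 1"
          have fR: "finite R" using R by (meson finite_atLeastAtMost finite_subset)
          have "\<forall>i\<in>U-R. (\<lambda>x. keps i (insert i R) * (b i x * \<omega> (insert i R) x)) \<in> H"
          proof
            fix i assume i: "i \<in> U - R"
            have iU: "i \<in> U" and iR: "i \<notin> R" using i by auto
            have "insert i R \<subseteq> {1..n}" using iU R unfolding U_def by blast
            moreover have "card (insert i R) = k"
              using card_insert_disjoint[OF fR iR] R False by simp
            ultimately have "\<omega> (insert i R) \<in> H" using coch unfolding cochain_def by blast
            then have "(\<lambda>x. b i x * \<omega> (insert i R) x) \<in> H"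
              by (rule goodH_mult[OF H bgood[OF iU]])
            then show "(\<lambda>x. keps i (insert i R) * (b i x * \<omega> (insert i R) x)) \<in> H"
              by (rule goodH_scal[OF H])
          qed
          then show "\<eta> R \<in> H" unfolding \<eta>_def
            by (rule goodH_sum[OF H finite_Diff[OF fU], where f="\<lambda>i x. keps i (insert i R) * (b i x * \<omega> (insert i R) x)"])
        qed
        moreover have "\<forall>S. S \<subseteq> {1..n} \<and> card S = k \<longrightarrow>
                     ae_eq (torus_measure n) (koszul_d (\<lambda>i. mult_op (theta m p n i)) l \<eta> S) (\<omega> S)"
          using hom unfolding U_def by blast
        ultimately have "\<exists>\<eta>. cochain H n (k - 1) \<eta> \<and> (\<forall>S. S \<subseteq> {1..n} \<and> card S = k \<longrightarrow>
                     ae_eq (torus_measure n) (koszul_d (\<lambda>i. mult_op (theta m p n i)) l \<eta> S) (\<omega> S))"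
          by blast
        then show ?thesis using False by simp
      qed
    qed
    then show False using nex by blast
  qed
qed



lemma goodH_L2space: "goodH m p n (L2 (torus_measure n))"
proof -
  have "\<forall>\<phi> f. goodfun m p n \<phi> \<longrightarrow> f \<in> L2 (torus_measure n) \<longrightarrow> (\<lambda>x. \<phi> x * f x) \<in> L2 (torus_measure n)"
  proof (intro allI impI)
    fix \<phi> f assume \<phi>: "goodfun m p n \<phi>" and f: "f \<in> L2 (torus_measure n)"
    obtain C where C: "AE x in torus_measure n. cmod (\<phi> x) \<le> C" using goodfun_AE_bound[OF \<phi>] by blast
    have "\<phi> \<in> borel_measurable (torus_measure n)" using \<phi> unfolding goodfun_def by blast
    then show "(\<lambda>x. \<phi> x * f x) \<in> L2 (torus_measure n)" by (rule L2_mult[OF f _ C])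
  qed
  moreover have "\<forall>f\<in>L2 (torus_measure n). \<forall>g\<in>L2 (torus_measure n). (\<lambda>x. f x + g x) \<in> L2 (torus_measure n)"
    using L2_add by blast
  ultimately show ?thesis unfolding goodH_def using L2_zero by blast
qed

lemma goodfun_mult_L2:
  assumes \<phi>: "goodfun m p n \<phi>" and f: "f \<in> L2 (torus_measure n)"
  shows "(\<lambda>x. \<phi> x * f x) \<in> L2 (torus_measure n)"
proof -
  obtain C where C: "AE x in torus_measure n. cmod (\<phi> x) \<le> C" using goodfun_AE_bound[OF \<phi>] by blast
  have "\<phi> \<in> borel_measurable (torus_measure n)" using \<phi> unfolding goodfun_def by blast
  then show ?thesis by (rule L2_mult[OF f _ C])
qed

lemma goodfun_invariant:
  assumes m: "0 < m" and \<sigma>: "\<sigma> \<in> Gmpn m p n" and \<phi>: "goodfun m p n \<phi>"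
  shows "\<phi> (gact n (Gmpn m p n) (ginv n (Gmpn m p n) \<sigma>) z) = \<phi> z"
proof -
  have t: "ginv n (Gmpn m p n) (ginv n (Gmpn m p n) \<sigma>) \<in> Gmpn m p n"
    by (rule ginv_in[OF m ginv_in[OF m \<sigma>]])
  have "theta_map m p n (gact n (Gmpn m p n) (ginv n (Gmpn m p n) \<sigma>) z) = theta_map m p n z"
    unfolding gact_def theta_map_def using theta_mvec[OF t] by simp
  then show ?thesis using \<phi> unfolding goodfun_def by blast
qed

lemma proj_add:
  "isotypic_proj n G \<rho> (\<lambda>x. f x + g x) z = isotypic_proj n G \<rho> f z + isotypic_proj n G \<rho> g z"
  unfolding isotypic_proj_def by (simp add: distrib_left sum.distrib)

lemma proj_zero: "isotypic_proj n G \<rho> (\<lambda>_. 0) = (\<lambda>_. 0)"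
  unfolding isotypic_proj_def by simp

lemma proj_mult:
  assumes m: "0 < m" and \<phi>: "goodfun m p n \<phi>"
  shows "isotypic_proj n (Gmpn m p n) \<rho> (\<lambda>x. \<phi> x * f x) z = \<phi> z * isotypic_proj n (Gmpn m p n) \<rho> f z"
proof -
  let ?G = "Gmpn m p n"
  have "(\<Sum>\<sigma>\<in>?G. character \<rho> (ginv n ?G \<sigma>) * (\<phi> (gact n ?G (ginv n ?G \<sigma>) z) * f (gact n ?G (ginv n ?G \<sigma>) z)))
      = (\<Sum>\<sigma>\<in>?G. \<phi> z * (character \<rho> (ginv n ?G \<sigma>) * f (gact n ?G (ginv n ?G \<sigma>) z)))"
    using goodfun_invariant[OF m _ \<phi>] by (intro sum.cong refl) (simp add: mult_ac)
  also have "\<dots> = \<phi> z * (\<Sum>\<sigma>\<in>?G. character \<rho> (ginv n ?G \<sigma>) * f (gact n ?G (ginv n ?G \<sigma>) z))"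
    by (rule sum_distrib_left[symmetric])
  finally show ?thesis unfolding isotypic_proj_def by (simp add: mult_ac)
qed

lemma goodH_iso:
  fixes \<rho> :: "(nat \<Rightarrow> nat \<Rightarrow> complex) \<Rightarrow> complex^'d^'d"
  assumes m: "0 < m"
  shows "goodH m p n (isotypic_range n (Gmpn m p n) \<rho>)"
proof -
  let ?M = "torus_measure n" and ?G = "Gmpn m p n"
  let ?H = "isotypic_range n ?G \<rho>"
  have mem: "g \<in> ?H \<longleftrightarrow> g \<in> L2 ?M \<and> (\<exists>f\<in>L2 ?M. ae_eq ?M g (isotypic_proj n ?G \<rho> f))" for g
    unfolding isotypic_range_def by simp
  have sub: "?H \<subseteq> L2 ?M" using mem by blast
  have zero: "(\<lambda>_. 0) \<in> ?H"
  proof -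
    have "ae_eq ?M (\<lambda>_. 0) (isotypic_proj n ?G \<rho> (\<lambda>_. 0))"
      unfolding proj_zero ae_eq_def by simp
    then show ?thesis unfolding mem using L2_zero[of ?M] by blast
  qed
  have add: "\<forall>f\<in>?H. \<forall>g\<in>?H. (\<lambda>x. f x + g x) \<in> ?H"
  proof (intro ballI)
    fix g1 g2 assume g1: "g1 \<in> ?H" and g2: "g2 \<in> ?H"
    obtain f1 where f1: "f1 \<in> L2 ?M" "AE x in ?M. g1 x = isotypic_proj n ?G \<rho> f1 x"
      using g1 unfolding mem ae_eq_def by blast
    obtain f2 where f2: "f2 \<in> L2 ?M" "AE x in ?M. g2 x = isotypic_proj n ?G \<rho> f2 x"
      using g2 unfolding mem ae_eq_def by blast
    have "AE x in ?M. g1 x + g2 x = isotypic_proj n ?G \<rho> (\<lambda>x. f1 x + f2 x) x"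
      using f1(2) f2(2) by eventually_elim (simp add: proj_add)
    moreover have "(\<lambda>x. g1 x + g2 x) \<in> L2 ?M" using g1 g2 sub L2_add by blast
    moreover have "(\<lambda>x. f1 x + f2 x) \<in> L2 ?M" using f1 f2 L2_add by blast
    ultimately show "(\<lambda>x. g1 x + g2 x) \<in> ?H" unfolding mem ae_eq_def by blast
  qed
  have mult: "\<forall>\<phi> f. goodfun m p n \<phi> \<longrightarrow> f \<in> ?H \<longrightarrow> (\<lambda>x. \<phi> x * f x) \<in> ?H"
  proof (intro allI impI)
    fix \<phi> g assume \<phi>: "goodfun m p n \<phi>" and g: "g \<in> ?H"
    obtain f where f: "f \<in> L2 ?M" "AE x in ?M. g x = isotypic_proj n ?G \<rho> f x"
      using g unfolding mem ae_eq_def by blast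
    have "AE x in ?M. \<phi> x * g x = isotypic_proj n ?G \<rho> (\<lambda>x. \<phi> x * f x) x"
      using f(2) by eventually_elim (simp add: proj_mult[OF m \<phi>])
    moreover have "(\<lambda>x. \<phi> x * g x) \<in> L2 ?M" using g sub goodfun_mult_L2[OF \<phi>] by blast
    moreover have "(\<lambda>x. \<phi> x * f x) \<in> L2 ?M" using f(1) goodfun_mult_L2[OF \<phi>] by blast
    ultimately show "(\<lambda>x. \<phi> x * g x) \<in> ?H" unfolding mem ae_eq_def by blast
  qed
  show ?thesis unfolding goodH_def using sub zero add mult by blast
qed

lemma Theta_unitary_goodH:
  assumes H: "goodH m p n H"
  shows "Theta_unitary m p n (torus_measure n) H (\<lambda>i. mult_op (theta m p n i))"
proof -
  have "\<forall>j\<in>{1..n}. normal_op (torus_measure n) H (mult_op (theta m p n j))"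
    using mult_normal[OF H goodfun_theta goodfun_cnj_theta] by blast
  moreover have "commuting_tuple (torus_measure n) H n (\<lambda>i. mult_op (theta m p n i))"
    unfolding commuting_tuple_def mult_op_def
    by (intro ballI ae_eq_refl_fun) (simp add: mult_ac)
  ultimately show ?thesis unfolding Theta_unitary_def using spectrum_sub[OF H] by blast
qed

theorem theorem4p14:
  fixes m p n :: nat
  assumes "0 < m" and "0 < p" and "p dvd m" and "1 < n"
  shows "Theta_unitary m p n (torus_measure n) (L2 (torus_measure n)) (\<lambda>i. mult_op (theta m p n i))
       \<and> (\<forall>\<rho> :: (nat \<Rightarrow> nat \<Rightarrow> complex) \<Rightarrow> complex^'d^'d.
            is_irrep n (Gmpn m p n) \<rho> \<longrightarrow>
            Theta_unitary m p n (torus_measure n) (isotypic_range n (Gmpn m p n) \<rho>)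
              (\<lambda>i. mult_op (theta m p n i)))"
  using Theta_unitary_goodH[OF goodH_L2space] Theta_unitary_goodH[OF goodH_iso[OF assms(1)]] by blast


end
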